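(* Let $N$ be even and $M_N$ the set of perfect matchings of $\{1,\dots,N\}$, each identified with a fixed-point-free involution $\pi\in S_N$. For $\pi\in M_N$ and $i,j,k\in\{1,\dots,N\}$ define $T_{ijk}(\pi)\in M_N$ as follows: if $|\{i,j,k,\pi(i),\pi(j),\pi(k)\}|<6$ then $T_{ijk}(\pi)=\pi$; otherwise $T_{ijk}(\pi)$ is the perfect matching obtained from $\pi$ by removing the pairs $\{\pi(i),i\},\{j,\pi(j)\},\{k,\pi(k)\}$ and adding the pairs $\{i,j\},\{\pi(j),k\},\{\pi(k),\pi(i)\}$. Let $\pi$ be uniform over $M_N$, let $i\in\{1,\dots,N\}$ be fixed, and let $a,b$ be uniform over $\{1,\dots,N\}\setminus\{i\}$, with $\pi,a,b$ independent. Then $T_{iab}(\pi)$ is uniform over $M_N$, and $(T_{iab}(\pi))(i)=a$ provided that $|\{i,a,b,\pi(i),\pi(a),\pi(b)\}|=6$. *)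

theory Defs
  imports "HOL-Probability.Probability" "HOL-Combinatorics.Permutations"
begin

definition perfect_matchings :: "nat \<Rightarrow> (nat \<Rightarrow> nat) set" where
  "perfect_matchings N = {\<pi>. \<pi> permutes {1..N} \<and>
      (\<forall>x\<in>{1..N}. \<pi> (\<pi> x) = x \<and> \<pi> x \<noteq> x)}"

definition switch :: "nat \<Rightarrow> nat \<Rightarrow> nat \<Rightarrow> (nat \<Rightarrow> nat) \<Rightarrow> (nat \<Rightarrow> nat)" where
  "switch i j k \<pi> =
     (if card {i, j, k, \<pi> i, \<pi> j, \<pi> k} < 6 then \<pi>
      else \<pi>(i := j, j := i, \<pi> j := k, k := \<pi> j, \<pi> k := \<pi> i, \<pi> i := \<pi> k))"

end

theory Submission
  imports Defs
begin

lemma card6: "card {a,b,c,d,e,f} = 6 \<longleftrightarrow> distinct [a,b,c,d,e,f::'a]"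
proof -
  have "{a,b,c,d,e,f} = set [a,b,c,d,e,f]" by simp
  moreover have "length [a,b,c,d,e,f] = 6" by simp
  ultimately show ?thesis using distinct_card card_distinct by metis
qed

lemma PM_facts:
  assumes "\<pi> \<in> perfect_matchings N"
  shows "\<pi> (\<pi> x) = x" "\<pi> x \<in> {1..N} \<longleftrightarrow> x \<in> {1..N}" "x \<in> {1..N} \<Longrightarrow> \<pi> x \<noteq> x"
    "x \<notin> {1..N} \<Longrightarrow> \<pi> x = x"
proof -
  have p: "\<pi> permutes {1..N}" and inv: "\<forall>x\<in>{1..N}. \<pi> (\<pi> x) = x \<and> \<pi> x \<noteq> x"
    using assms unfolding perfect_matchings_def by auto
  show "x \<notin> {1..N} \<Longrightarrow> \<pi> x = x" using p by (meson permutes_not_in)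
  then show "\<pi> (\<pi> x) = x" using inv by (cases "x \<in> {1..N}") auto
  show "\<pi> x \<in> {1..N} \<longleftrightarrow> x \<in> {1..N}" using p permutes_in_image by metis
  show "x \<in> {1..N} \<Longrightarrow> \<pi> x \<noteq> x" using inv by auto
qed

lemma sw_val:
  assumes "distinct [i,a,b,\<pi> i,\<pi> a,\<pi> b]"
  shows "switch i a b \<pi> = (\<lambda>x. if x=i then a else if x=a then i else if x = \<pi> a then b
     else if x = b then \<pi> a else if x = \<pi> b then \<pi> i else if x = \<pi> i then \<pi> b else \<pi> x)"
proof -
  have "card {i,a,b,\<pi> i,\<pi> a,\<pi> b} = 6" using assms card6 by metis
  then show ?thesis using assms unfolding switch_def by (auto simp: fun_eq_iff)
qed

lemma sw_M:
  assumes "\<pi> \<in> perfect_matchings N" "i \<in> {1..N}" "a \<in> {1..N}" "b \<in> {1..N}"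
    "distinct [i,a,b,\<pi> i,\<pi> a,\<pi> b]"
  shows "switch i a b \<pi> \<in> perfect_matchings N"
proof -
  define \<sigma> where "\<sigma> = switch i a b \<pi>"
  note F = PM_facts[OF assms(1)]
  have s: "\<sigma> = (\<lambda>x. if x=i then a else if x=a then i else if x = \<pi> a then b
     else if x = b then \<pi> a else if x = \<pi> b then \<pi> i else if x = \<pi> i then \<pi> b else \<pi> x)"
    unfolding \<sigma>_def using sw_val[OF assms(5)] .
  have D: "i \<noteq> a" "i \<noteq> b" "i \<noteq> \<pi> i" "i \<noteq> \<pi> a" "i \<noteq> \<pi> b" "a \<noteq> b" "a \<noteq> \<pi> i" "a \<noteq> \<pi> a"
    "a \<noteq> \<pi> b" "b \<noteq> \<pi> i" "b \<noteq> \<pi> a" "b \<noteq> \<pi> b" "\<pi> i \<noteq> \<pi> a" "\<pi> i \<noteq> \<pi> b" "\<pi> a \<noteq> \<pi> b"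
    using assms(5) by auto
  note DD = D D[symmetric]
  have v: "\<sigma> i = a" "\<sigma> a = i" "\<sigma> (\<pi> a) = b" "\<sigma> b = \<pi> a" "\<sigma> (\<pi> b) = \<pi> i" "\<sigma> (\<pi> i) = \<pi> b"
    unfolding s by (simp_all add: DD)
  have o: "\<sigma> x = \<pi> x" if "x \<notin> {i,a,b,\<pi> i,\<pi> a,\<pi> b}" for x
    using that unfolding s by auto
  have o2: "\<pi> x \<notin> {i,a,b,\<pi> i,\<pi> a,\<pi> b}" if "x \<notin> {i,a,b,\<pi> i,\<pi> a,\<pi> b}" for x
    using that F(1)[of x] F(1)[of i] F(1)[of a] F(1)[of b] by auto
  have invol: "\<sigma> (\<sigma> x) = x" for x
  proof (cases "x \<in> {i,a,b,\<pi> i,\<pi> a,\<pi> b}")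
    case True then show ?thesis using v by auto
  next
    case False then show ?thesis using o[OF False] o[OF o2[OF False]] F(1)[of x] by simp
  qed
  have six: "{i,a,b,\<pi> i,\<pi> a,\<pi> b} \<subseteq> {1..N}" using assms(2-4) F(2) by auto
  have out: "\<sigma> x = x" if "x \<notin> {1..N}" for x
  proof -
    have "x \<notin> {i,a,b,\<pi> i,\<pi> a,\<pi> b}" using six that by blast
    then show ?thesis using o F(4)[OF that] by metis
  qed
  have nf: "x \<in> {1..N} \<Longrightarrow> \<sigma> x \<noteq> x" for x
  proof (cases "x \<in> {i,a,b,\<pi> i,\<pi> a,\<pi> b}")
    case True then show ?thesis using v DD by auto
  next
    case False then show "x \<in> {1..N} \<Longrightarrow> \<sigma> x \<noteq> x" using o[OF False] F(3)[of x] by simp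
  qed
  have "\<sigma> permutes {1..N}" unfolding permutes_def
    using out invol by metis
  then have "\<sigma> \<in> perfect_matchings N" using invol nf unfolding perfect_matchings_def by blast
  then show ?thesis unfolding \<sigma>_def .
qed

lemma sw_pts:
  assumes "distinct [i,a,b,\<pi> i,\<pi> a,\<pi> b]"
  shows "switch i a b \<pi> i = a" "switch i a b \<pi> a = i" "switch i a b \<pi> (\<pi> a) = b"
    "switch i a b \<pi> b = \<pi> a" "switch i a b \<pi> (\<pi> b) = \<pi> i" "switch i a b \<pi> (\<pi> i) = \<pi> b"
    "x \<notin> {i,a,b,\<pi> i,\<pi> a,\<pi> b} \<Longrightarrow> switch i a b \<pi> x = \<pi> x"
proof -
  have D: "i \<noteq> a" "i \<noteq> b" "i \<noteq> \<pi> i" "i \<noteq> \<pi> a" "i \<noteq> \<pi> b" "a \<noteq> b" "a \<noteq> \<pi> i" "a \<noteq> \<pi> a"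
    "a \<noteq> \<pi> b" "b \<noteq> \<pi> i" "b \<noteq> \<pi> a" "b \<noteq> \<pi> b" "\<pi> i \<noteq> \<pi> a" "\<pi> i \<noteq> \<pi> b" "\<pi> a \<noteq> \<pi> b"
    using assms by auto
  note DD = D D[symmetric]
  note s = sw_val[OF assms]
  show "switch i a b \<pi> i = a" "switch i a b \<pi> a = i" "switch i a b \<pi> (\<pi> a) = b"
    "switch i a b \<pi> b = \<pi> a" "switch i a b \<pi> (\<pi> b) = \<pi> i" "switch i a b \<pi> (\<pi> i) = \<pi> b"
    unfolding s by (simp_all add: DD)
  show "x \<notin> {i,a,b,\<pi> i,\<pi> a,\<pi> b} \<Longrightarrow> switch i a b \<pi> x = \<pi> x" unfolding s by simp
qed

lemma sw_back:
  assumes "\<pi> \<in> perfect_matchings N" "distinct [i,a,b,\<pi> i,\<pi> a,\<pi> b]"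
  shows "distinct [i, \<pi> i, b, switch i a b \<pi> i, switch i a b \<pi> (\<pi> i), switch i a b \<pi> b]
    \<and> switch i (\<pi> i) b (switch i a b \<pi>) = \<pi> \<and> switch i a b \<pi> i = a"
proof -
  define \<sigma> where "\<sigma> = switch i a b \<pi>"
  note F = PM_facts[OF assms(1)]
  note P = sw_pts[OF assms(2), folded \<sigma>_def]
  have d0: "distinct [i, \<pi> i, b, a, \<pi> b, \<pi> a]" using assms(2) by auto
  have d: "distinct [i, \<pi> i, b, \<sigma> i, \<sigma> (\<pi> i), \<sigma> b]" using d0 P by simp
  note Q = sw_pts[OF d]
  have "switch i (\<pi> i) b \<sigma> x = \<pi> x" for x
  proof (cases "x \<in> {i,a,b,\<pi> i,\<pi> a,\<pi> b}")
    case True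
    then show ?thesis unfolding P(1,4,6) using Q(1-6)  F(1)[of i] F(1)[of a] F(1)[of b]
      unfolding P(1,4,6) by auto
  next
    case False
    then have "x \<notin> {i, \<pi> i, b, \<sigma> i, \<sigma> (\<pi> i), \<sigma> b}" unfolding P(1,4,6) by auto
    then show ?thesis using Q(7) P(7)[OF False] by simp
  qed
  then show ?thesis using d P(1) unfolding \<sigma>_def by auto
qed

lemma pmf_of_set_times:
  assumes "finite A" "finite B" "A \<noteq> {}" "B \<noteq> {}"
  shows "pmf_of_set (A \<times> B) = pair_pmf (pmf_of_set A) (pmf_of_set B)"
proof (rule pmf_eqI)
  fix x :: "'a \<times> 'b"
  obtain a b where x: "x = (a,b)" by fastforce
  have "A \<times> B \<noteq> {}" "finite (A \<times> B)" using assms by auto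
  then show "pmf (pmf_of_set (A \<times> B)) x = pmf (pair_pmf (pmf_of_set A) (pmf_of_set B)) x"
    unfolding x using assms by (simp add: pmf_pair card_cartesian_product indicator_def)
qed

lemma PM_nonempty:
  assumes "even N"
  shows "perfect_matchings N \<noteq> {}"
proof -
  define m where "m x = (if x \<in> {1..N} then (if odd x then x+1 else x-1) else x)" for x :: nat
  have in1: "x \<in> {1..N} \<Longrightarrow> m x \<in> {1..N}" for x
    using assms unfolding m_def by (auto elim!: oddE evenE) presburger
  have out: "x \<notin> {1..N} \<Longrightarrow> m x = x" for x unfolding m_def by auto
  have invol: "m (m x) = x" for x
  proof (cases "x \<in> {1..N}")
    case True
    then show ?thesis using in1[OF True] unfolding m_def by (auto elim!: oddE evenE)
  next
    case False then show ?thesis using out[OF False] by simp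
  qed
  have nf: "x \<in> {1..N} \<Longrightarrow> m x \<noteq> x" for x unfolding m_def by (auto elim!: oddE evenE)
  have "m permutes {1..N}" unfolding permutes_def using out invol by metis
  then have "m \<in> perfect_matchings N" using invol nf unfolding perfect_matchings_def by blast
  then show ?thesis by blast
qed

lemma card6_le: "card {a,b,c,d,e,f::'a} \<le> 6"
proof -
  have "{a,b,c,d,e,f} = set [a,b,c,d,e,f]" by simp
  moreover have "length [a,b,c,d,e,f] = 6" by simp
  ultimately show ?thesis using card_length[of "[a,b,c,d,e,f]"] by metis
qed

theorem lemma3p4:
  fixes N i :: nat
  assumes "even N" and "i \<in> {1..N}"
  shows "map_pmf (\<lambda>(\<pi>, a, b). switch i a b \<pi>)
           (pmf_of_set (perfect_matchings N \<times> ({1..N} - {i}) \<times> ({1..N} - {i})))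
         = pmf_of_set (perfect_matchings N)
     \<and> (\<forall>\<pi>\<in>perfect_matchings N. \<forall>a\<in>{1..N} - {i}. \<forall>b\<in>{1..N} - {i}.
          card {i, a, b, \<pi> i, \<pi> a, \<pi> b} = 6 \<longrightarrow> switch i a b \<pi> i = a)"
proof
  define M where "M = perfect_matchings N"
  define X where "X = {1..N} - {i}"
  define S where "S = M \<times> X \<times> X"
  define nd where "nd = (\<lambda>(\<pi>::nat\<Rightarrow>nat, a::nat, b::nat). distinct [i,a,b,\<pi> i,\<pi> a,\<pi> b])"
  define F where "F = (\<lambda>(\<pi>::nat\<Rightarrow>nat, a::nat, b::nat).
     if distinct [i,a,b,\<pi> i,\<pi> a,\<pi> b] then (switch i a b \<pi>, \<pi> i, b) else (\<pi>, a, b))"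
  define G where "G = (\<lambda>(\<sigma>::nat\<Rightarrow>nat, c::nat, b::nat).
     if distinct [i,c,b,\<sigma> i,\<sigma> c,\<sigma> b] then (switch i c b \<sigma>, \<sigma> i, b) else (\<sigma>, c, b))"
  have finM: "finite M"
  proof -
    have "M \<subseteq> {p. p permutes {1..N}}" unfolding M_def perfect_matchings_def by auto
    then show ?thesis using finite_permutations[of "{1..N}"] finite_subset by blast
  qed
  have neM: "M \<noteq> {}" unfolding M_def using PM_nonempty[OF assms(1)] .
  have N2: "N \<ge> 2" using assms by (auto elim!: evenE)
  have neX: "X \<noteq> {}"
  proof -
    have "(if i = 1 then 2 else 1) \<in> X" unfolding X_def using N2 by auto
    then show ?thesis by blast
  qed
  have finX: "finite X" unfolding X_def by simp
  have finS: "finite S" "S \<noteq> {}" unfolding S_def using finM finX neM neX by auto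
  have fst: "fst (F x) = (\<lambda>(\<pi>, a, b). switch i a b \<pi>) x" for x
  proof -
    obtain \<pi> a b where x: "x = (\<pi>, a, b)" by (metis prod.exhaust)
    show ?thesis
    proof (cases "distinct [i,a,b,\<pi> i,\<pi> a,\<pi> b]")
      case True then show ?thesis unfolding x F_def by (simp only: prod.case True if_True fst_conv)
    next
      case False
      then have "card {i,a,b,\<pi> i,\<pi> a,\<pi> b} < 6" using card6[of i a b "\<pi> i" "\<pi> a" "\<pi> b"]
          card6_le[of i a b "\<pi> i" "\<pi> a" "\<pi> b"] by linarith
      then have sw: "switch i a b \<pi> = \<pi>" unfolding switch_def by simp
      have "F x = x" unfolding x F_def by (simp only: prod.case False if_False)
      then show ?thesis unfolding x using sw by simp
    qed
  qed
  have FS: "F x \<in> S \<and> G (F x) = x" if "x \<in> S" for x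
  proof -
    obtain \<pi> a b where x: "x = (\<pi>, a, b)" by (metis prod.exhaust)
    have pM: "\<pi> \<in> M" and aX: "a \<in> X" and bX: "b \<in> X" using that unfolding x S_def by auto
    note PF = PM_facts[OF pM[unfolded M_def]]
    show ?thesis
    proof (cases "distinct [i,a,b,\<pi> i,\<pi> a,\<pi> b]")
      case True
      note B = sw_back[OF pM[unfolded M_def] True]
      have "switch i a b \<pi> \<in> M" unfolding M_def
        using sw_M[OF pM[unfolded M_def] assms(2) _ _ True] aX bX unfolding X_def by auto
      moreover have "\<pi> i \<in> X" unfolding X_def using PF(2)[of i] PF(3)[of i] assms(2) by auto
      ultimately have "F x \<in> S" unfolding x F_def S_def using bX by (simp only: prod.case True if_True) blast
      moreover have "G (F x) = x"
      proof -
        have Fx: "F x = (switch i a b \<pi>, \<pi> i, b)" unfolding x F_def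
          by (simp only: prod.case True if_True)
        have c: "distinct [i, \<pi> i, b, switch i a b \<pi> i, switch i a b \<pi> (\<pi> i), switch i a b \<pi> b]"
          using B by blast
        have "G (F x) = (switch i (\<pi> i) b (switch i a b \<pi>), switch i a b \<pi> i, b)" unfolding Fx G_def
          by (simp only: prod.case c if_True)
        then show ?thesis using B x by simp
      qed
      ultimately show ?thesis by blast
    next
      case False
      have "F x = x" unfolding x F_def by (simp only: prod.case False if_False)
      moreover have "G x = x" unfolding x G_def by (simp only: prod.case False if_False)
      ultimately show ?thesis using that by simp
    qed
  qed
  have inj: "inj_on F S" by (rule inj_on_inverseI[where g = G]) (use FS in blast)
  have sub: "F ` S \<subseteq> S" using FS by blast
  have img: "F ` S = S"
    using card_subset_eq[OF finS(1) sub] card_image[OF inj] by simp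
  have eq1: "(\<lambda>(\<pi>, a, b). switch i a b \<pi>) = fst \<circ> F" using fst by (auto simp: fun_eq_iff)
  have "map_pmf (\<lambda>(\<pi>, a, b). switch i a b \<pi>) (pmf_of_set S)
        = map_pmf fst (map_pmf F (pmf_of_set S))" unfolding eq1 by (simp add: pmf.map_comp)
  also have "\<dots> = map_pmf fst (pmf_of_set S)"
    using map_pmf_of_set_inj[OF inj finS(2) finS(1)] img by simp
  also have "\<dots> = pmf_of_set M"
    unfolding S_def using pmf_of_set_times[of M "X \<times> X"] finM finX neM neX
    by (simp add: map_fst_pair_pmf)
  finally show "map_pmf (\<lambda>(\<pi>, a, b). switch i a b \<pi>)
           (pmf_of_set (perfect_matchings N \<times> ({1..N} - {i}) \<times> ({1..N} - {i})))
         = pmf_of_set (perfect_matchings N)" unfolding S_def M_def X_def .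
next
  show "\<forall>\<pi>\<in>perfect_matchings N. \<forall>a\<in>{1..N} - {i}. \<forall>b\<in>{1..N} - {i}.
          card {i, a, b, \<pi> i, \<pi> a, \<pi> b} = 6 \<longrightarrow> switch i a b \<pi> i = a"
    using card6 sw_pts(1) by metis
qed

end
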